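(* Let $\beta_n,\beta_d$ be coprime positive integers with $\beta_n>\beta_d$, put $\beta=\beta_n/\beta_d$, let $\zeta\geq 1$ be an integer and let $\epsilon_s\in(0,1)$. Consider the time-homogeneous Markov chain on the finite state space $\mathcal{S}=\{k/\beta_d : k=0,1,\dots,\beta_n(\zeta+1)\}$ with the following transition probabilities from a state $x\in\mathcal{S}$: (i) if $x\le 1$ ("idle" state): go to $\beta$ with probability $\epsilon_s$ and to $0$ with probability $1-\epsilon_s$; (ii) if $1<x\le \beta\zeta+1$ ("safe" state): go to $x+\beta-1$ with probability $\epsilon_s$ and to $x-1$ with probability $1-\epsilon_s$; (iii) if $x>\beta\zeta+1$ ("hazard" state): go to $x-1$ with probability $1$. Then this Markov chain is irreducible (every state is reachable from every state) and aperiodic.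
   Context: This chain models a two-staged adaptive successive cancellation list decoder: a fast decoder decodes each incoming codeword in time $t_s$ and fails independently with probability $\epsilon_s$; failed codewords are stored in a buffer of capacity $\zeta$ codewords and re-decoded by a slow decoder needing time $\beta t_s$. The state $x=\beta i_\zeta+i_\beta$ is the total remaining time (in units of $t_s$) needed to clear the buffer, where $i_\zeta\in\{0,\dots,\zeta\}$ is the number of buffered codewords and $i_\beta\in\{i/\beta_d: 0\le i\le \beta_n\}$ is the remaining decoding time of the slow decoder; one step of the chain corresponds to time $t_s$. The transition rules above are the paper's definition of the model. *)

theory Defs
  imports Complex_Main
begin

definition states :: "nat \<Rightarrow> nat \<Rightarrow> nat \<Rightarrow> real set" where
  "states bn bd z = (\<lambda>k. real k / real bd) ` {0..bn * (z + 1)}"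

definition trans_prob :: "nat \<Rightarrow> nat \<Rightarrow> nat \<Rightarrow> real \<Rightarrow> real \<Rightarrow> real \<Rightarrow> real" where
  "trans_prob bn bd z e x y =
     (let \<beta> = real bn / real bd in
      if x \<le> 1 then
        (if y = \<beta> then e else 0) + (if y = 0 then 1 - e else 0)
      else if x \<le> \<beta> * real z + 1 then
        (if y = x + \<beta> - 1 then e else 0) + (if y = x - 1 then 1 - e else 0)
      else (if y = x - 1 then 1 else 0))"

fun nstep_prob :: "nat \<Rightarrow> nat \<Rightarrow> nat \<Rightarrow> real \<Rightarrow> nat \<Rightarrow> real \<Rightarrow> real \<Rightarrow> real" where
  "nstep_prob bn bd z e 0 x y = (if x = y then 1 else 0)"
| "nstep_prob bn bd z e (Suc n) x y =
     (\<Sum>w\<in>states bn bd z. trans_prob bn bd z e x w * nstep_prob bn bd z e n w y)"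

definition irreducible_chain :: "nat \<Rightarrow> nat \<Rightarrow> nat \<Rightarrow> real \<Rightarrow> bool" where
  "irreducible_chain bn bd z e \<longleftrightarrow>
     (\<forall>x\<in>states bn bd z. \<forall>y\<in>states bn bd z. \<exists>n. nstep_prob bn bd z e n x y > 0)"

definition period :: "nat \<Rightarrow> nat \<Rightarrow> nat \<Rightarrow> real \<Rightarrow> real \<Rightarrow> nat" where
  "period bn bd z e x = Gcd {n. 0 < n \<and> nstep_prob bn bd z e n x x > 0}"

definition aperiodic_chain :: "nat \<Rightarrow> nat \<Rightarrow> nat \<Rightarrow> real \<Rightarrow> bool" where
  "aperiodic_chain bn bd z e \<longleftrightarrow> (\<forall>x\<in>states bn bd z. period bn bd z e x = 1)"

end

theory Submission
  imports Defs
begin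

context
  fixes bn bd z :: nat and e :: real
  assumes bd0: "0 < bd" and bdn: "bd < bn" and cop: "coprime bn bd" and z1: "1 \<le> z" and e0: "0 < e" and e1: "e < 1"
begin

lemma tp_nonneg: "0 \<le> trans_prob bn bd z e x y"
  using e0 e1 by (auto simp: trans_prob_def Let_def)

lemma np_nonneg: "0 \<le> nstep_prob bn bd z e n x y"
  by (induction n arbitrary: x) (auto intro!: sum_nonneg mult_nonneg_nonneg tp_nonneg)

lemma finS: "finite (states bn bd z)" by (simp add: states_def)

lemma stS: "k \<le> bn*(z+1) \<Longrightarrow> real k / real bd \<in> states bn bd z"
  by (auto simp: states_def)

lemma np_step: "w \<in> states bn bd z \<Longrightarrow> 0 < trans_prob bn bd z e x w \<Longrightarrow>
   0 < nstep_prob bn bd z e n w y \<Longrightarrow> 0 < nstep_prob bn bd z e (Suc n) x y"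
  by simp (intro sum_pos2[OF finS, of w]; auto intro: mult_pos_pos mult_nonneg_nonneg tp_nonneg np_nonneg)

lemma np_ext: assumes a: "0 < nstep_prob bn bd z e (Suc n) x y"
  shows "\<exists>w\<in>states bn bd z. 0 < trans_prob bn bd z e x w \<and> 0 < nstep_prob bn bd z e n w y"
proof (rule ccontr)
  assume b: "\<not> ?thesis"
  have "\<And>w. w \<in> states bn bd z \<Longrightarrow> trans_prob bn bd z e x w * nstep_prob bn bd z e n w y \<le> 0"
  proof -
    fix w assume "w \<in> states bn bd z"
    with b have "\<not> (0 < trans_prob bn bd z e x w \<and> 0 < nstep_prob bn bd z e n w y)" by blast
    moreover have "0 \<le> trans_prob bn bd z e x w" "0 \<le> nstep_prob bn bd z e n w y"
      by (rule tp_nonneg, rule np_nonneg)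
    ultimately show "trans_prob bn bd z e x w * nstep_prob bn bd z e n w y \<le> 0"
      by (metis less_eq_real_def mult_zero_left mult_zero_right)
  qed
  then have "nstep_prob bn bd z e (Suc n) x y \<le> 0" by (simp add: sum_nonpos)
  with a show False by simp
qed

lemma np_comp: "0 < nstep_prob bn bd z e m x w \<Longrightarrow> 0 < nstep_prob bn bd z e n w y \<Longrightarrow>
   0 < nstep_prob bn bd z e (m+n) x y"
proof (induction m arbitrary: x)
  case 0
  then show ?case by (simp split: if_splits)
next
  case (Suc m)
  then obtain v where v: "v \<in> states bn bd z" "0 < trans_prob bn bd z e x v"
    "0 < nstep_prob bn bd z e m v w" using np_ext by blast
  with Suc have "0 < nstep_prob bn bd z e (m+n) v y" by blast
  with v show ?case using np_step by simp
qed

lemma T0: assumes "a \<le> bd" shows "0 < trans_prob bn bd z e (real a / real bd) 0"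
proof -
  have "real a / real bd \<le> 1" using bd0 assms by (simp add: divide_le_eq)
  then show ?thesis using e0 e1 by (auto simp: trans_prob_def Let_def)
qed

lemma Tbn: assumes "a \<le> bd" shows "0 < trans_prob bn bd z e (real a / real bd) (real bn / real bd)"
proof -
  have "real a / real bd \<le> 1" using bd0 assms by (simp add: divide_le_eq)
  then show ?thesis using e0 e1 by (auto simp: trans_prob_def Let_def)
qed

lemma Tdown: assumes "bd < a"
  shows "0 < trans_prob bn bd z e (real a / real bd) (real (a - bd) / real bd)"
proof -
  have h1: "\<not> real a / real bd \<le> 1" using bd0 assms by (simp add: divide_le_eq)
  have h2: "real (a - bd) / real bd = real a / real bd - 1"
    using bd0 assms by (simp add: of_nat_diff field_simps)
  show ?thesis using e0 e1 h1 by (auto simp: trans_prob_def Let_def h2)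
qed

lemma Tup: assumes "bd < a" "a \<le> bn*z + bd"
  shows "0 < trans_prob bn bd z e (real a / real bd) (real (a + bn - bd) / real bd)"
proof -
  have h1: "\<not> real a / real bd \<le> 1" using bd0 assms by (simp add: divide_le_eq)
  have h3: "real a / real bd \<le> real bn / real bd * real z + 1"
  proof -
    have "real a \<le> real bn * real z + real bd" using assms(2) by (metis of_nat_add of_nat_le_iff of_nat_mult)
    then show ?thesis using bd0 by (simp add: field_simps)
  qed
  have h4: "real (a + bn - bd) / real bd = real a / real bd + real bn / real bd - 1"
    using bd0 assms by (simp add: of_nat_diff field_simps)
  show ?thesis using e0 e1 h1 h3 by (auto simp: trans_prob_def Let_def h4)
qed

definition R :: "nat \<Rightarrow> bool" where
  "R t \<longleftrightarrow> (\<exists>n. 0 < nstep_prob bn bd z e n 0 (real t / real bd))"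

lemma R0: "R 0" unfolding R_def by (rule exI[of _ 0]) simp

lemma R_step: assumes "R k" "k' \<le> bn*(z+1)"
  "0 < trans_prob bn bd z e (real k / real bd) (real k' / real bd)"
shows "R k'"
proof -
  obtain n where n: "0 < nstep_prob bn bd z e n 0 (real k / real bd)" using assms(1) R_def by blast
  have "0 < nstep_prob bn bd z e (Suc 0) (real k / real bd) (real k' / real bd)"
    by (rule np_step[OF stS[OF assms(2)] assms(3)]) simp
  from np_comp[OF n this] show ?thesis unfolding R_def by blast
qed

lemma R_down1: assumes "R (t + bd)" "t + bd \<le> bn*(z+1)" shows "R t"
proof (cases "t = 0")
  case True
  then show ?thesis using R_step[OF assms(1), of 0] T0[of "t+bd"] by simp
next
  case False
  then show ?thesis using R_step[OF assms(1), of t] Tdown[of "t+bd"] assms(2) by simp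
qed

lemma R_down: "R (t + j*bd) \<Longrightarrow> t + j*bd \<le> bn*(z+1) \<Longrightarrow> R t"
proof (induction j)
  case 0 then show ?case by simp
next
  case (Suc j)
  have eq: "t + Suc j * bd = (t + j*bd) + bd" by simp
  from Suc.prems have "R (t + j*bd)" using R_down1[of "t + j*bd"] unfolding eq by simp
  with Suc show ?case by simp
qed

lemma R_up: assumes "R k" "bd < k" "k \<le> bn*z + bd" shows "R (k + bn - bd)"
proof -
  have "k + bn - bd \<le> bn*(z+1)" using assms(3) bdn by (simp add: algebra_simps)
  then show ?thesis using R_step[OF assms(1)] Tup[OF assms(2,3)] by blast
qed

lemma bdz: "bd \<le> bn * z"
proof -
  show ?thesis using z1 bdn by (metis le_trans less_imp_le mult.right_neutral mult_le_mono2)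
qed

lemma R_res: assumes "1 \<le> i"
  shows "\<exists>s. R s \<and> bn \<le> s \<and> s \<le> bn*(z+1) \<and> s mod bd = (i*bn) mod bd"
  using assms
proof (induction i rule: nat_induct_at_least)
  case base
  have "R bn" using R_step[OF R0, of bn] Tbn[of 0] by simp
  then show ?case by (intro exI[of _ bn]) simp
next
  case (Suc i)
  then obtain s where s: "R s" "bn \<le> s" "s \<le> bn*(z+1)" "s mod bd = (i*bn) mod bd" by blast
  define k where "k = (s - bd - 1) div bd"
  define q where "q = bd + 1 + (s - bd - 1) mod bd"
  have sq: "s = q + k * bd" unfolding q_def k_def using s(2) bdn
    by (metis add.assoc add.commute add_diff_inverse_nat le_add_diff_inverse2 less_imp_le_nat
        div_mult_mod_eq Suc_leI add_Suc_right diff_diff_left less_le_trans plus_1_eq_Suc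
        not_less_eq_eq)
  have qlo: "bd < q" unfolding q_def by simp
  have qhi: "q \<le> 2*bd" unfolding q_def using mod_less_divisor[OF bd0, of "s - bd - 1"] by simp
  have Rq: "R q" using R_down[of q k] s sq by simp
  have qs: "q \<le> bn*z + bd" using qhi bdz by simp
  have Rs': "R (q + bn - bd)" by (rule R_up[OF Rq qlo qs])
  have s'le: "q + bn - bd \<le> bn*(z+1)" using qs bdn by (simp add: algebra_simps)
  have eq2: "(q + bn - bd) + (k+1)*bd = s + bn" using sq qlo by (simp add: algebra_simps)
  have "(q + bn - bd) mod bd = ((q + bn - bd) + (k+1)*bd) mod bd" by (rule mod_mult_self1[symmetric])
  also have "\<dots> = (s + bn) mod bd" by (simp only: eq2)
  also have "\<dots> = (i*bn + bn) mod bd" using s(4) by (metis mod_add_left_eq)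
  finally have "(q + bn - bd) mod bd = (Suc i * bn) mod bd" by (simp add: add.commute)
  then show ?case using Rs' s'le qlo by (intro exI[of _ "q + bn - bd"]) auto
qed

lemma R_all: "t \<le> bn*(z+1) \<Longrightarrow> R t"
proof (induction t rule: less_induct)
  case (less t)
  show ?case
  proof (cases "t \<le> bn")
    case True
    obtain x y where xy: "bn * x = bd * y + gcd bn bd" using bezout_nat[of bn bd] bdn by auto
    have g: "gcd bn bd = 1" using cop by (simp add: coprime_iff_gcd_eq_1)
    with xy have xy: "bn * x = bd * y + 1" by simp
    define i where "i = x*t + bd"
    have "1 \<le> i" unfolding i_def using bd0 by simp
    from R_res[OF this] obtain s where s: "R s" "bn \<le> s" "s \<le> bn*(z+1)" "s mod bd = (i*bn) mod bd"
      by blast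
    have "i * bn = (bn * x) * t + bd*bn" unfolding i_def by (simp add: algebra_simps)
    also have "\<dots> = (bd * y + 1) * t + bd*bn" by (simp only: xy)
    also have "\<dots> = t + bd * (y*t + bn)" by (simp add: algebra_simps)
    finally have "i * bn = t + bd * (y*t + bn)" .
    then have "(i*bn) mod bd = t mod bd" by simp
    with s(4) have "s mod bd = t mod bd" by simp
    moreover have "t \<le> s" using True s(2) by simp
    ultimately have "bd dvd s - t" using mod_eq_dvd_iff_nat by blast
    then obtain j where j: "s - t = bd * j" by blast
    then have "s = t + bd * j" using \<open>t \<le> s\<close> by linarith
    then have "s = t + j * bd" by (simp add: mult.commute)
    then show ?thesis using R_down[of t j] s by simp
  next
    case False
    define p where "p = t - bn + bd"
    have "p < t" "bd < p" "p \<le> bn*z + bd" using False bdn less.prems unfolding p_def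
      by (auto simp: algebra_simps)
    then have "R p" using less by simp
    from R_up[OF this \<open>bd < p\<close> \<open>p \<le> bn*z + bd\<close>] show ?thesis
      using False bdn unfolding p_def by simp
  qed
qed

lemma D: "a \<le> bn*(z+1) \<Longrightarrow> \<exists>n. 0 < nstep_prob bn bd z e n (real a / real bd) 0"
proof (induction a rule: less_induct)
  case (less a)
  show ?case
  proof (cases "a \<le> bd")
    case True
    have "0 < nstep_prob bn bd z e (Suc 0) (real a / real bd) 0"
      by (rule np_step[OF _ T0[OF True]]) (use stS[of 0] in simp_all)
    then show ?thesis by blast
  next
    case False
    then have "a - bd < a" "a - bd \<le> bn*(z+1)" using less.prems bd0 by auto
    with less obtain n where n: "0 < nstep_prob bn bd z e n (real (a - bd) / real bd) 0" by blast
    have "0 < nstep_prob bn bd z e (Suc n) (real a / real bd) 0"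
      by (rule np_step[OF stS[OF \<open>a - bd \<le> bn*(z+1)\<close>] _ n]) (use Tdown False in auto)
    then show ?thesis by blast
  qed
qed

lemma loop0: "0 < nstep_prob bn bd z e (Suc 0) 0 0"
  by (rule np_step[of 0]) (use stS[of 0] T0[of 0] in simp_all)

end

theorem proposition2:
  fixes bn bd z :: nat and e :: real
  assumes "0 < bd" and "bd < bn" and "coprime bn bd"
    and "1 \<le> z"
    and "0 < e" and "e < 1"
  shows "irreducible_chain bn bd z e \<and> aperiodic_chain bn bd z e"
proof
  note A = assms(1,2,3,4,5,6)
  show "irreducible_chain bn bd z e"
    unfolding irreducible_chain_def
  proof (intro ballI)
    fix x y assume "x \<in> states bn bd z" "y \<in> states bn bd z"
    then obtain a b where ab: "a \<le> bn*(z+1)" "b \<le> bn*(z+1)" "x = real a / real bd" "y = real b / real bd"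
      by (auto simp: states_def)
    obtain n1 where n1: "0 < nstep_prob bn bd z e n1 x 0" using D[OF A ab(1)] ab(3) by blast
    obtain n2 where n2: "0 < nstep_prob bn bd z e n2 0 y" using R_all[OF A ab(2)] ab(4)
      unfolding R_def[OF A] by blast
    show "\<exists>n. 0 < nstep_prob bn bd z e n x y" using np_comp[OF A n1 n2] by blast
  qed
  show "aperiodic_chain bn bd z e"
    unfolding aperiodic_chain_def period_def
  proof (intro ballI)
    fix x assume "x \<in> states bn bd z"
    then obtain a where a: "a \<le> bn*(z+1)" "x = real a / real bd"
      by (auto simp: states_def)
    obtain n1 where n1: "0 < nstep_prob bn bd z e n1 x 0" using D[OF A a(1)] a(2) by blast
    obtain n2 where n2: "0 < nstep_prob bn bd z e n2 0 x" using R_all[OF A a(1)] a(2)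
      unfolding R_def[OF A] by blast
    have l0: "0 < nstep_prob bn bd z e (Suc 0) 0 0" by (rule loop0[OF A])
    have c1: "0 < nstep_prob bn bd z e (Suc 0 + n2) 0 x" by (rule np_comp[OF A l0 n2])
    have c2: "0 < nstep_prob bn bd z e (Suc 0 + (Suc 0 + n2)) 0 x" by (rule np_comp[OF A l0 c1])
    have d1: "0 < nstep_prob bn bd z e (n1 + (Suc 0 + n2)) x x" by (rule np_comp[OF A n1 c1])
    have d2: "0 < nstep_prob bn bd z e (n1 + (Suc 0 + (Suc 0 + n2))) x x" by (rule np_comp[OF A n1 c2])
    let ?G = "Gcd {n. 0 < n \<and> 0 < nstep_prob bn bd z e n x x}"
    have g1: "?G dvd Suc (n1 + n2)" by (rule Gcd_dvd) (use d1 in simp)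
    have g2: "?G dvd Suc (Suc (n1 + n2))" by (rule Gcd_dvd) (use d2 in simp)
    have "?G dvd Suc (Suc (n1 + n2)) - Suc (n1 + n2)" by (rule dvd_diff_nat[OF g2 g1])
    then show "?G = 1" by simp
  qed
qed

end
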